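(* Consider a position in the $K^4$-building game on a complete graph board $G$ in which it is the first player's turn. Suppose that $G$ contains a realised promising graph $H$ (of one of the six types described in the context), and suppose that there is no monochromatic $K^4$ on the board and no threat by the second player on the board, even if the vulnerable edges of $H$ are additionally regarded as edges claimed by the second player. Then the first player can play a sequence of moves, each of which creates a threat, the last of which creates two threats simultaneously; consequently the first player wins the game.
   Context: The $K^4$-building game on a complete graph $G$ (the board): two players, the first player (red) and the second player (blue), starting with the first player, alternately claim one not-yet-claimed edge of $G$ in their own colour. A player wins as soon as she/he has claimed all six edges on some set of four vertices; if neither ever does, the second player wins. A threat (by a player) is a set of four vertices of the board on which that player has claimed exactly five of the six edges and the sixth edge is unclaimed. Promising graphs. Each type below is a complete graph on the listed vertices with a colouring of some edges; red = claimed by the first player, blue = claimed by the second player, all other edges among the listed vertices are unclaimed, and certain edges are designated vulnerable. Type 1: vertices $a,b,c,d,e$; red $ab,ac,ad,ae,bc,cd$; blue $bd$; no vulnerable edges. Type 2: vertices $a,b,c,d,e$; red $ab,ac,ad,ae,bc$; vulnerable edge $bd$. Type 3: vertices $a,b,c,d,e,f$; red $ab,ac,ad,ae,af,bc$; blue $bd,be$; vulnerable edges $bf, ce$. Type 4: vertices $a,b,c,d,e,f$; red $ab,ac,ad,ae,af,bc$; blue $bd,ef$; vulnerable edges $be,bf$. Type 5: vertices $a,b,c,d,e,f,g$; red $ab,ac,ad,ae,af,ag,bc$; blue $bd,be,bf,ce,df$; vulnerable edges $bg,cd,cf$. Type 6: vertices $a,b,c,d,e,f,g$; red $ab,ac,ad,ae,af,ag,bc$;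 blue $bd,be,bf,cd,ce$; vulnerable edges $bg,cf,ef$. A promising graph of a given type is the coloured complete graph of that type in which additionally the vulnerable edges are claimed by the second player. A realised promising graph in the board $G$ is a set of vertices of $G$ such that the complete subgraph of $G$ on it, with the current claimed edges, is isomorphic (as an edge-coloured graph) to one of the six types above with the vulnerable edges unclaimed; i.e. among these vertices the claimed edges are exactly the red and blue edges listed, and the vulnerable edges (as well as all other unlisted edges) are unclaimed. *)

theory Defs
  imports Main
begin

text \<open>A position is given by the vertex set V of the board and the sets R (edges claimed
  by the first player, red) and B (edges claimed by the second player, blue).\<close>

definition board_edges :: "'a set \<Rightarrow> 'a set set" where
  "board_edges S = {e. e \<subseteq> S \<and> card e = 2}"

definition has_K4 :: "'a set \<Rightarrow> 'a set set \<Rightarrow> bool" where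
  "has_K4 V X \<longleftrightarrow> (\<exists>S. S \<subseteq> V \<and> card S = 4 \<and> board_edges S \<subseteq> X)"

definition threat :: "'a set \<Rightarrow> 'a set set \<Rightarrow> 'a set set \<Rightarrow> 'a set \<Rightarrow> bool" where
  "threat V X Y S \<longleftrightarrow> S \<subseteq> V \<and> card S = 4 \<and>
     (\<exists>e \<in> board_edges S. board_edges S - {e} \<subseteq> X \<and> e \<notin> X \<and> e \<notin> Y)"

text \<open>After a red move that does not
  immediately win, the board must still contain an unclaimed edge (otherwise the game ends
  and the second player wins), and every blue reply must neither complete a blue K4 nor
  lead to a position that is not a red win.\<close>
inductive red_wins :: "'a set \<Rightarrow> 'a set set \<Rightarrow> 'a set set \<Rightarrow> bool" for V :: "'a set" where
  immediate: "\<lbrakk> e \<in> board_edges V; e \<notin> R; e \<notin> B; has_K4 V (insert e R) \<rbrakk>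
     \<Longrightarrow> red_wins V R B"
| step: "\<lbrakk> e \<in> board_edges V; e \<notin> R; e \<notin> B;
           board_edges V - insert e R - B \<noteq> {};
           \<forall>f \<in> board_edges V - insert e R - B.
              \<not> has_K4 V (insert f B) \<and> red_wins V (insert e R) (insert f B) \<rbrakk>
     \<Longrightarrow> red_wins V R B"

text \<open>Promising graph types 1..6. Vertices a,b,c,d,e,f,g are encoded as 0,1,...,6.\<close>

definition pt_size :: "nat \<Rightarrow> nat" where
  "pt_size t = (if t \<le> 2 then 5 else if t \<le> 4 then 6 else 7)"

definition pt_red :: "nat \<Rightarrow> nat set set" where
  "pt_red t =
    (if t = 1 then {{0,1},{0,2},{0,3},{0,4},{1,2},{2,3}}
     else if t = 2 then {{0,1},{0,2},{0,3},{0,4},{1,2}}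
     else if t = 3 \<or> t = 4 then {{0,1},{0,2},{0,3},{0,4},{0,5},{1,2}}
     else {{0,1},{0,2},{0,3},{0,4},{0,5},{0,6},{1,2}})"

definition pt_blue :: "nat \<Rightarrow> nat set set" where
  "pt_blue t =
    (if t = 1 then {{1,3}}
     else if t = 2 then {}
     else if t = 3 then {{1,3},{1,4}}
     else if t = 4 then {{1,3},{4,5}}
     else if t = 5 then {{1,3},{1,4},{1,5},{2,4},{3,5}}
     else {{1,3},{1,4},{1,5},{2,3},{2,4}})"

definition pt_vul :: "nat \<Rightarrow> nat set set" where
  "pt_vul t =
    (if t = 1 then {}
     else if t = 2 then {{1,3}}
     else if t = 3 then {{1,5},{2,4}}
     else if t = 4 then {{1,4},{1,5}}
     else if t = 5 then {{1,6},{2,3},{2,5}}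
     else {{1,6},{2,5},{4,5}})"

definition realised :: "'a set \<Rightarrow> 'a set set \<Rightarrow> 'a set set \<Rightarrow> nat \<Rightarrow> (nat \<Rightarrow> 'a) \<Rightarrow> bool" where
  "realised V R B t f \<longleftrightarrow> t \<in> {1..6} \<and> inj_on f {..<pt_size t} \<and> f ` {..<pt_size t} \<subseteq> V \<and>
     (\<forall>i < pt_size t. \<forall>j < pt_size t. i \<noteq> j \<longrightarrow>
        ({f i, f j} \<in> R \<longleftrightarrow> {i, j} \<in> pt_red t) \<and>
        ({f i, f j} \<in> B \<longleftrightarrow> {i, j} \<in> pt_blue t))"

definition vul_edges :: "nat \<Rightarrow> (nat \<Rightarrow> 'a) \<Rightarrow> 'a set set" where
  "vul_edges t f = (\<lambda>e. f ` e) ` pt_vul t"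

end

theory Submission
  imports Defs
begin

lemma board_edges_4_sub:
  assumes "y \<in> board_edges {a,b,c,d}"
  shows "y = {a,b} \<or> y = {a,c} \<or> y = {a,d} \<or> y = {b,c} \<or> y = {b,d} \<or> y = {c,d}"
proof -
  have x1: "y \<subseteq> {a,b,c,d}" and x2: "card y = 2" using assms unfolding board_edges_def by auto
  obtain u v where x: "y = {u,v}" "u \<noteq> v" using x2 by (auto simp: card_2_iff)
  then have "u \<in> {a,b,c,d}" "v \<in> {a,b,c,d}" using x1 by auto
  then show ?thesis using x(2) unfolding x(1)
    by (elim insertE emptyE) (simp_all add: doubleton_eq_iff)
qed
lemma noK4_blue:
  assumes "\<not> has_K4 V (B \<union> W)" "\<not> (\<exists>S. threat V (B \<union> W) R S)"
    "B' \<subseteq> B \<union> W" "R \<subseteq> R'" "g \<notin> R'"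
  shows "\<not> has_K4 V (insert g B')"
proof
  assume "has_K4 V (insert g B')"
  then obtain S where S: "S \<subseteq> V" "card S = 4" "board_edges S \<subseteq> insert g B'"
    unfolding has_K4_def by (elim exE conjE)
  show False
  proof (cases "g \<in> board_edges S \<and> g \<notin> B \<union> W")
    case True
    have "board_edges S - {g} \<subseteq> B \<union> W" using S(3) assms(3) by blast
    moreover have "g \<notin> R" using assms(4,5) by blast
    ultimately have "threat V (B \<union> W) R S" unfolding threat_def using S(1,2) True by blast
    then show False using assms(2) by blast
  next
    case False
    then have "board_edges S \<subseteq> B \<union> W" using S(3) assms(3) by blast
    then show False using assms(1) S(1,2) unfolding has_K4_def by blast
  qed
qed
lemma force_abs:
  assumes "e \<in> board_edges V" "e \<notin> R" "e \<notin> B"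
    "m \<in> board_edges V" "m \<notin> R" "m \<notin> B" "m \<noteq> e"
    "has_K4 V (insert m (insert e R))"
    "\<forall>g. g \<notin> insert e R \<longrightarrow> \<not> has_K4 V (insert g B)"
    "red_wins V (insert e R) (insert m B)"
  shows "red_wins V R B"
proof (rule red_wins.step[of e])
  show "board_edges V - insert e R - B \<noteq> {}" using assms by blast
  show "\<forall>g\<in>board_edges V - insert e R - B.
       \<not> has_K4 V (insert g B) \<and> red_wins V (insert e R) (insert g B)"
  proof
    fix g assume g: "g \<in> board_edges V - insert e R - B"
    show "\<not> has_K4 V (insert g B) \<and> red_wins V (insert e R) (insert g B)"
    proof (cases "g = m")
      case True then show ?thesis using assms g by blast
    next
      case False
      have "red_wins V (insert e R) (insert g B)"
        using red_wins.immediate[of m V "insert e R" "insert g B"] assms(4,5,6,7,8) False by blast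
      then show ?thesis using assms g by blast
    qed
  qed
qed (use assms(1-3) in auto)

lemma double_abs:
  assumes "e \<in> board_edges V" "e \<notin> R" "e \<notin> B"
    "m1 \<in> board_edges V" "m1 \<notin> R" "m1 \<notin> B" "m1 \<noteq> e"
    "m2 \<in> board_edges V" "m2 \<notin> R" "m2 \<notin> B" "m2 \<noteq> e" "m1 \<noteq> m2"
    "has_K4 V (insert m1 (insert e R))"
    "has_K4 V (insert m2 (insert e R))"
    "\<forall>g. g \<notin> insert e R \<longrightarrow> \<not> has_K4 V (insert g B)"
  shows "red_wins V R B"
proof (rule red_wins.step[of e])
  show "board_edges V - insert e R - B \<noteq> {}" using assms by blast
  show "\<forall>g\<in>board_edges V - insert e R - B.
       \<not> has_K4 V (insert g B) \<and> red_wins V (insert e R) (insert g B)"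
  proof
    fix g assume g: "g \<in> board_edges V - insert e R - B"
    show "\<not> has_K4 V (insert g B) \<and> red_wins V (insert e R) (insert g B)"
    proof (cases "g = m1")
      case True
      have "red_wins V (insert e R) (insert g B)"
        using red_wins.immediate[of m2 V "insert e R" "insert g B"] assms(8,9,10,11,12,14) True by blast
      then show ?thesis using assms g by blast
    next
      case False
      have "red_wins V (insert e R) (insert g B)"
        using red_wins.immediate[of m1 V "insert e R" "insert g B"] assms(4,5,6,7,13) False by blast
      then show ?thesis using assms g by blast
    qed
  qed
qed (use assms(1-3) in auto)


context
  fixes V :: "'a set" and R B :: "'a set set" and t :: nat and f :: "nat \<Rightarrow> 'a"
  assumes real: "realised V R B t f"
    and nk: "\<not> has_K4 V (B \<union> vul_edges t f)"
    and nt: "\<not> (\<exists>S. threat V (B \<union> vul_edges t f) R S)"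
begin

lemma Rinj: "inj_on f {..<pt_size t}"
  using real unfolding realised_def by (elim conjE)

lemma Rsub: "f ` {..<pt_size t} \<subseteq> V"
  using real unfolding realised_def by (elim conjE)

lemma L1:
  assumes "i < pt_size t" "j < pt_size t" "i \<noteq> j" shows "{f i, f j} \<in> board_edges V"
proof -
  note inj = Rinj and sub = Rsub
  have "f i \<noteq> f j" using inj assms by (auto dest: inj_onD)
  moreover have "f i \<in> V" "f j \<in> V" using sub assms by auto
  ultimately show ?thesis unfolding board_edges_def by auto
qed

lemma Hreal: "\<forall>i < pt_size t. \<forall>j < pt_size t. i \<noteq> j \<longrightarrow>
        ({f i, f j} \<in> R \<longleftrightarrow> {i, j} \<in> pt_red t) \<and>
        ({f i, f j} \<in> B \<longleftrightarrow> {i, j} \<in> pt_blue t)"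
  using real unfolding realised_def by (elim conjE)

lemma L2: assumes "i < pt_size t" "j < pt_size t" "i \<noteq> j" shows "{f i, f j} \<in> R \<longleftrightarrow> {i,j} \<in> pt_red t"
  using Hreal[rule_format, OF assms] by simp

lemma L2b: assumes "i < pt_size t" "j < pt_size t" "i \<noteq> j" shows "{f i, f j} \<in> B \<longleftrightarrow> {i,j} \<in> pt_blue t"
  using Hreal[rule_format, OF assms] by simp

lemma L3:
  assumes "X \<subseteq> Pow {..<pt_size t}" "i < pt_size t" "j < pt_size t"
  shows "{f i, f j} \<in> image f ` X \<longleftrightarrow> {i,j} \<in> X"
proof -
  have inj: "inj_on (image f) (Pow {..<pt_size t})"
    using Rinj by (rule inj_on_image_Pow)
  have ij: "{i,j} \<in> Pow {..<pt_size t}" using assms by auto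
  show ?thesis
  proof
    assume "{f i, f j} \<in> image f ` X"
    then obtain x where x: "x \<in> X" "f ` {i,j} = f ` x" by auto
    then have "x = {i,j}" using inj_onD[OF inj x(2) ij] assms(1) by blast
    then show "{i,j} \<in> X" using x(1) by simp
  next
    assume "{i,j} \<in> X"
    then have "f ` {i,j} \<in> image f ` X" by (rule imageI)
    then show "{f i, f j} \<in> image f ` X" by simp
  qed
qed

lemma L4:
  assumes "a < pt_size t" "b < pt_size t" "c < pt_size t" "d < pt_size t" "distinct [a,b,c,d]"
    "{f a, f b} \<in> X" "{f a, f c} \<in> X" "{f a, f d} \<in> X" "{f b, f c} \<in> X" "{f b, f d} \<in> X" "{f c, f d} \<in> X"
  shows "has_K4 V X"
proof -
  note inj = Rinj and sub = Rsub
  have dist: "distinct [f a, f b, f c, f d]"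
    using assms(1-5) inj by (auto simp: inj_on_def)
  have h1: "{f a, f b, f c, f d} \<subseteq> V" using sub assms(1-4) by auto
  have h2: "card {f a, f b, f c, f d} = 4" using dist by simp
  have h3: "board_edges {f a, f b, f c, f d} \<subseteq> X"
    using assms(6-11) by (auto dest!: board_edges_4_sub)
  show ?thesis unfolding has_K4_def by (intro exI[of _ "{f a, f b, f c, f d}"] conjI h1 h2 h3)
qed

lemma noK4': "Bn \<subseteq> pt_vul t \<Longrightarrow> g \<notin> Rx \<Longrightarrow> R \<subseteq> Rx \<Longrightarrow> \<not> has_K4 V (insert g (B \<union> image f ` Bn))"
  by (rule noK4_blue[OF nk nt]) (auto simp: vul_edges_def)

lemma pair_map:
  assumes "x < pt_size t" "y < pt_size t" "x \<noteq> y" "Rn \<subseteq> Pow {..<pt_size t}"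
    "{x,y} \<in> insert {k,l} (insert {i,j} (pt_red t \<union> Rn))"
  shows "{f x, f y} \<in> insert {f k, f l} (insert {f i, f j} (R \<union> image f ` Rn))"
proof -
  show ?thesis using assms L2[of x y] L3[of Rn x y] by auto
qed

lemma nforce:
  assumes Rn: "Rn \<subseteq> Pow {..<pt_size t}" and Bn: "Bn \<subseteq> pt_vul t"
    and vb: "pt_vul t \<subseteq> Pow {..<pt_size t}"
    and x: "i < pt_size t" "j < pt_size t" "i \<noteq> j" "{i,j} \<notin> pt_red t" "{i,j} \<notin> pt_blue t" "{i,j} \<notin> Rn" "{i,j} \<notin> Bn"
    and m: "k < pt_size t" "l < pt_size t" "k \<noteq> l" "{k,l} \<in> pt_vul t" "{k,l} \<notin> pt_red t" "{k,l} \<notin> pt_blue t"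
       "{k,l} \<notin> Rn" "{k,l} \<notin> Bn" "{k,l} \<noteq> {i,j}"
    and K: "a < pt_size t" "b < pt_size t" "c < pt_size t" "d < pt_size t" "distinct [a,b,c,d]"
      "\<forall>p\<in>{{a,b},{a,c},{a,d},{b,c},{b,d},{c,d}}. p \<in> insert {k,l} (insert {i,j} (pt_red t \<union> Rn))"
    and W: "red_wins V (R \<union> image f ` insert {i,j} Rn) (B \<union> image f ` insert {k,l} Bn)"
  shows "red_wins V (R \<union> image f ` Rn) (B \<union> image f ` Bn)"
proof (rule force_abs[of "{f i, f j}" _ _ _ "{f k, f l}"])
  have Bn': "Bn \<subseteq> Pow {..<pt_size t}" using Bn vb by blast
  show "{f i, f j} \<in> board_edges V" by (rule L1) fact+
  show "{f k, f l} \<in> board_edges V" by (rule L1) fact+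
  show "{f i, f j} \<notin> R \<union> image f ` Rn" using L2 L3[OF Rn] x by auto
  show "{f i, f j} \<notin> B \<union> image f ` Bn" using L2b L3[OF Bn'] x by auto
  show "{f k, f l} \<notin> R \<union> image f ` Rn" using L2 L3[OF Rn] m by auto
  show "{f k, f l} \<notin> B \<union> image f ` Bn" using L2b L3[OF Bn'] m by auto
  have "{i,j} \<in> Pow {..<pt_size t}" "{k,l} \<in> Pow {..<pt_size t}" using x m by auto
  then show "{f k, f l} \<noteq> {f i, f j}"
    using m(9) L3[of "{{i,j}}" k l] m(1,2) by auto
  show "has_K4 V (insert {f k, f l} (insert {f i, f j} (R \<union> image f ` Rn)))"
    by (rule L4[OF K(1-5)]; rule pair_map; use K Rn in auto)
  show "\<forall>g. g \<notin> insert {f i, f j} (R \<union> image f ` Rn) \<longrightarrow> \<not> has_K4 V (insert g (B \<union> image f ` Bn))"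
    using noK4'[OF Bn] by blast
  show "red_wins V (insert {f i, f j} (R \<union> image f ` Rn)) (insert {f k, f l} (B \<union> image f ` Bn))"
    using W by simp
qed

lemma ndouble:
  assumes Rn: "Rn \<subseteq> Pow {..<pt_size t}" and Bn: "Bn \<subseteq> pt_vul t"
    and vb: "pt_vul t \<subseteq> Pow {..<pt_size t}"
    and x: "i < pt_size t" "j < pt_size t" "i \<noteq> j" "{i,j} \<notin> pt_red t" "{i,j} \<notin> pt_blue t" "{i,j} \<notin> Rn" "{i,j} \<notin> Bn"
    and m: "k < pt_size t" "l < pt_size t" "k \<noteq> l" "{k,l} \<notin> pt_red t" "{k,l} \<notin> pt_blue t"
       "{k,l} \<notin> Rn" "{k,l} \<notin> Bn" "{k,l} \<noteq> {i,j}"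
    and m2: "kkx < pt_size t" "llx < pt_size t" "kkx \<noteq> llx" "{kkx,llx} \<notin> pt_red t" "{kkx,llx} \<notin> pt_blue t"
       "{kkx,llx} \<notin> Rn" "{kkx,llx} \<notin> Bn" "{kkx,llx} \<noteq> {i,j}" "{kkx,llx} \<noteq> {k,l}"
    and K: "a < pt_size t" "b < pt_size t" "c < pt_size t" "d < pt_size t" "distinct [a,b,c,d]"
      "\<forall>p\<in>{{a,b},{a,c},{a,d},{b,c},{b,d},{c,d}}. p \<in> insert {k,l} (insert {i,j} (pt_red t \<union> Rn))"
    and K2: "aax < pt_size t" "bbx < pt_size t" "ccx < pt_size t" "ddx < pt_size t" "distinct [aax,bbx,ccx,ddx]"
      "\<forall>p\<in>{{aax,bbx},{aax,ccx},{aax,ddx},{bbx,ccx},{bbx,ddx},{ccx,ddx}}. p \<in> insert {kkx,llx} (insert {i,j} (pt_red t \<union> Rn))"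
  shows "red_wins V (R \<union> image f ` Rn) (B \<union> image f ` Bn)"
proof (rule double_abs[of "{f i, f j}" _ _ _ "{f k, f l}" "{f kkx, f llx}"])
  have Bn': "Bn \<subseteq> Pow {..<pt_size t}" using Bn vb by blast
  show "{f i, f j} \<in> board_edges V" by (rule L1) fact+
  show "{f k, f l} \<in> board_edges V" by (rule L1) fact+
  show "{f kkx, f llx} \<in> board_edges V" by (rule L1) fact+
  show "{f i, f j} \<notin> R \<union> image f ` Rn" using L2 L3[OF Rn] x by auto
  show "{f i, f j} \<notin> B \<union> image f ` Bn" using L2b L3[OF Bn'] x by auto
  show "{f k, f l} \<notin> R \<union> image f ` Rn" using L2 L3[OF Rn] m by auto
  show "{f k, f l} \<notin> B \<union> image f ` Bn" using L2b L3[OF Bn'] m by auto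
  show "{f kkx, f llx} \<notin> R \<union> image f ` Rn" using L2 L3[OF Rn] m2 by auto
  show "{f kkx, f llx} \<notin> B \<union> image f ` Bn" using L2b L3[OF Bn'] m2 by auto
  have "{i,j} \<in> Pow {..<pt_size t}" "{k,l} \<in> Pow {..<pt_size t}" using x m by auto
  then show "{f k, f l} \<noteq> {f i, f j}"
    using m(8) L3[of "{{i,j}}" k l] m(1,2) by auto
  have "{i,j} \<in> Pow {..<pt_size t}" "{k,l} \<in> Pow {..<pt_size t}" using x m by auto
  then show "{f kkx, f llx} \<noteq> {f i, f j}"
    using m2(8) L3[of "{{i,j}}" kkx llx] m2(1,2) by auto
  have "{k,l} \<in> Pow {..<pt_size t}" using m by auto
  then show "{f k, f l} \<noteq> {f kkx, f llx}"
    using m2(9) L3[of "{{k,l}}" kkx llx] m2(1,2) by auto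
  show "has_K4 V (insert {f k, f l} (insert {f i, f j} (R \<union> image f ` Rn)))"
    by (rule L4[OF K(1-5)]; rule pair_map; use K Rn in auto)
  show "has_K4 V (insert {f kkx, f llx} (insert {f i, f j} (R \<union> image f ` Rn)))"
    by (rule L4[OF K2(1-5)]; rule pair_map; use K2 Rn in auto)
  show "\<forall>g. g \<notin> insert {f i, f j} (R \<union> image f ` Rn) \<longrightarrow> \<not> has_K4 V (insert g (B \<union> image f ` Bn))"
    using noK4'[OF Bn] by blast
qed

end


theorem lemma3p2:
  fixes V :: "'a set" and R B :: "'a set set" and t :: nat and f :: "nat \<Rightarrow> 'a"
  assumes "R \<subseteq> board_edges V" and "B \<subseteq> board_edges V" and "R \<inter> B = {}"
    and "realised V R B t f"
    and "\<not> has_K4 V R" and "\<not> has_K4 V B" and "\<not> has_K4 V (B \<union> vul_edges t f)"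
    and "\<not> (\<exists>S. threat V B R S)"
    and "\<not> (\<exists>S. threat V (B \<union> vul_edges t f) R S)"
  shows "red_wins V R B"
proof -
  note real = assms(4) and nk = assms(7) and nt = assms(9)
  have "t \<in> {1..6}" using real unfolding realised_def by (elim conjE)
  then have "t = 1 \<or> t = 2 \<or> t = 3 \<or> t = 4 \<or> t = 5 \<or> t = 6" by auto
  then show ?thesis
  proof (elim disjE)
    assume ht: "t = 1"
    have nxt: "red_wins V (R \<union> image f ` {}) (B \<union> image f ` {})"
      by (rule ndouble[OF real nk nt, where i=2 and j=4 and k=1 and l=4 and a=0 and b=1 and c=2 and d=4 and kkx=3 and llx=4 and aax=0 and bbx=2 and ccx=3 and ddx=4]) (simp_all add: ht pt_size_def pt_red_def pt_blue_def pt_vul_def doubleton_eq_iff)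
    then show ?thesis by simp
  next
    assume ht: "t = 2"
    have nxt: "red_wins V (R \<union> image f ` {{2,3}}) (B \<union> image f ` {{1,3}})"
      by (rule ndouble[OF real nk nt, where i=2 and j=4 and k=1 and l=4 and a=0 and b=1 and c=2 and d=4 and kkx=3 and llx=4 and aax=0 and bbx=2 and ccx=3 and ddx=4]) (simp_all add: ht pt_size_def pt_red_def pt_blue_def pt_vul_def doubleton_eq_iff)
    have nxt: "red_wins V (R \<union> image f ` {}) (B \<union> image f ` {})"
      by (rule nforce[OF real nk nt, where i=2 and j=3 and k=1 and l=3 and a=0 and b=1 and c=2 and d=3]) (use nxt in \<open>simp_all add: ht pt_size_def pt_red_def pt_blue_def pt_vul_def doubleton_eq_iff\<close>)
    then show ?thesis by simp
  next
    assume ht: "t = 3"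
    have nxt: "red_wins V (R \<union> image f ` {{4,5},{2,5}}) (B \<union> image f ` {{2,4},{1,5}})"
      by (rule ndouble[OF real nk nt, where i=3 and j=5 and k=2 and l=3 and a=0 and b=2 and c=3 and d=5 and kkx=3 and llx=4 and aax=0 and bbx=3 and ccx=4 and ddx=5]) (simp_all add: ht pt_size_def pt_red_def pt_blue_def pt_vul_def doubleton_eq_iff)
    have nxt: "red_wins V (R \<union> image f ` {{2,5}}) (B \<union> image f ` {{1,5}})"
      by (rule nforce[OF real nk nt, where i=4 and j=5 and k=2 and l=4 and a=0 and b=2 and c=4 and d=5]) (use nxt in \<open>simp_all add: ht pt_size_def pt_red_def pt_blue_def pt_vul_def doubleton_eq_iff\<close>)
    have nxt: "red_wins V (R \<union> image f ` {}) (B \<union> image f ` {})"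
      by (rule nforce[OF real nk nt, where i=2 and j=5 and k=1 and l=5 and a=0 and b=1 and c=2 and d=5]) (use nxt in \<open>simp_all add: ht pt_size_def pt_red_def pt_blue_def pt_vul_def doubleton_eq_iff\<close>)
    then show ?thesis by simp
  next
    assume ht: "t = 4"
    have nxt: "red_wins V (R \<union> image f ` {{2,5},{2,4}}) (B \<union> image f ` {{1,5},{1,4}})"
      by (rule ndouble[OF real nk nt, where i=2 and j=3 and k=3 and l=4 and a=0 and b=2 and c=3 and d=4 and kkx=3 and llx=5 and aax=0 and bbx=2 and ccx=3 and ddx=5]) (simp_all add: ht pt_size_def pt_red_def pt_blue_def pt_vul_def doubleton_eq_iff)
    have nxt: "red_wins V (R \<union> image f ` {{2,4}}) (B \<union> image f ` {{1,4}})"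
      by (rule nforce[OF real nk nt, where i=2 and j=5 and k=1 and l=5 and a=0 and b=1 and c=2 and d=5]) (use nxt in \<open>simp_all add: ht pt_size_def pt_red_def pt_blue_def pt_vul_def doubleton_eq_iff\<close>)
    have nxt: "red_wins V (R \<union> image f ` {}) (B \<union> image f ` {})"
      by (rule nforce[OF real nk nt, where i=2 and j=4 and k=1 and l=4 and a=0 and b=1 and c=2 and d=4]) (use nxt in \<open>simp_all add: ht pt_size_def pt_red_def pt_blue_def pt_vul_def doubleton_eq_iff\<close>)
    then show ?thesis by simp
  next
    assume ht: "t = 5"
    have nxt: "red_wins V (R \<union> image f ` {{3,6},{5,6},{2,6}}) (B \<union> image f ` {{2,3},{2,5},{1,6}})"
      by (rule ndouble[OF real nk nt, where i=4 and j=6 and k=3 and l=4 and a=0 and b=3 and c=4 and d=6 and kkx=4 and llx=5 and aax=0 and bbx=4 and ccx=5 and ddx=6]) (simp_all add: ht pt_size_def pt_red_def pt_blue_def pt_vul_def doubleton_eq_iff)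
    have nxt: "red_wins V (R \<union> image f ` {{5,6},{2,6}}) (B \<union> image f ` {{2,5},{1,6}})"
      by (rule nforce[OF real nk nt, where i=3 and j=6 and k=2 and l=3 and a=0 and b=2 and c=3 and d=6]) (use nxt in \<open>simp_all add: ht pt_size_def pt_red_def pt_blue_def pt_vul_def doubleton_eq_iff\<close>)
    have nxt: "red_wins V (R \<union> image f ` {{2,6}}) (B \<union> image f ` {{1,6}})"
      by (rule nforce[OF real nk nt, where i=5 and j=6 and k=2 and l=5 and a=0 and b=2 and c=5 and d=6]) (use nxt in \<open>simp_all add: ht pt_size_def pt_red_def pt_blue_def pt_vul_def doubleton_eq_iff\<close>)
    have nxt: "red_wins V (R \<union> image f ` {}) (B \<union> image f ` {})"
      by (rule nforce[OF real nk nt, where i=2 and j=6 and k=1 and l=6 and a=0 and b=1 and c=2 and d=6]) (use nxt in \<open>simp_all add: ht pt_size_def pt_red_def pt_blue_def pt_vul_def doubleton_eq_iff\<close>)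
    then show ?thesis by simp
  next
    assume ht: "t = 6"
    have nxt: "red_wins V (R \<union> image f ` {{4,6},{5,6},{2,6}}) (B \<union> image f ` {{4,5},{2,5},{1,6}})"
      by (rule ndouble[OF real nk nt, where i=3 and j=6 and k=3 and l=4 and a=0 and b=3 and c=4 and d=6 and kkx=3 and llx=5 and aax=0 and bbx=3 and ccx=5 and ddx=6]) (simp_all add: ht pt_size_def pt_red_def pt_blue_def pt_vul_def doubleton_eq_iff)
    have nxt: "red_wins V (R \<union> image f ` {{5,6},{2,6}}) (B \<union> image f ` {{2,5},{1,6}})"
      by (rule nforce[OF real nk nt, where i=4 and j=6 and k=4 and l=5 and a=0 and b=4 and c=5 and d=6]) (use nxt in \<open>simp_all add: ht pt_size_def pt_red_def pt_blue_def pt_vul_def doubleton_eq_iff\<close>)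
    have nxt: "red_wins V (R \<union> image f ` {{2,6}}) (B \<union> image f ` {{1,6}})"
      by (rule nforce[OF real nk nt, where i=5 and j=6 and k=2 and l=5 and a=0 and b=2 and c=5 and d=6]) (use nxt in \<open>simp_all add: ht pt_size_def pt_red_def pt_blue_def pt_vul_def doubleton_eq_iff\<close>)
    have nxt: "red_wins V (R \<union> image f ` {}) (B \<union> image f ` {})"
      by (rule nforce[OF real nk nt, where i=2 and j=6 and k=1 and l=6 and a=0 and b=1 and c=2 and d=6]) (use nxt in \<open>simp_all add: ht pt_size_def pt_red_def pt_blue_def pt_vul_def doubleton_eq_iff\<close>)
    then show ?thesis by simp
  qed
qed

end
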